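(* Let $A$ be a set and let $\mathcal{E}$ be a set of subsets of $A$ such that (C1) for every $K\subseteq A$, $K\in\mathcal{E}$ if and only if $A\setminus K\notin\mathcal{E}$; and (C2) if $K\in\mathcal{E}$ and $K\subseteq L\subseteq A$, then $L\in\mathcal{E}$. Suppose each member of $A$ chooses one of the six strict total orders on three candidates $a,b,c$, labelled by $\mathbb{Z}/6\mathbb{Z}$ as: $1: a>b>c$, $2: a>c>b$, $3: c>a>b$, $4: c>b>a$, $5: b>c>a$, $6: b>a>c$. For $p\in\mathbb{Z}/6\mathbb{Z}$ let $K(p)$ be the set of members who chose ranking $p$, and $K(p,q,r)=K(p)\cup K(q)\cup K(r)$. Define the collective preference by: for distinct candidates $x,y$, $x$ is collectively preferred to $y$ iff the set of members who rank $x$ above $y$ belongs to $\mathcal{E}$. If (V) there exists $p$ such that $K(p,p+1,p+2)\in\mathcal{E}$ and $K(p+1,p+2,p+3)\in\mathcal{E}$, then the collective preference is a strict total order on $\{a,b,c\}$.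
   Context: Indices are taken modulo $6$. By (C1), for each pair of distinct candidates exactly one of the two collective preferences holds. *)

theory Defs
  imports Main
begin

datatype cand = Ca | Cb | Cc

text \<open>Score of a candidate in ranking with label p (labels taken modulo 6;
  label 6 is represented by residue 0).\<close>
fun score :: "int \<Rightarrow> cand \<Rightarrow> nat" where
  "score p x =
    (let q = p mod 6 in
     if q = 1 then (case x of Ca \<Rightarrow> 2 | Cb \<Rightarrow> 1 | Cc \<Rightarrow> 0)
     else if q = 2 then (case x of Ca \<Rightarrow> 2 | Cc \<Rightarrow> 1 | Cb \<Rightarrow> 0)
     else if q = 3 then (case x of Cc \<Rightarrow> 2 | Ca \<Rightarrow> 1 | Cb \<Rightarrow> 0)
     else if q = 4 then (case x of Cc \<Rightarrow> 2 | Cb \<Rightarrow> 1 | Ca \<Rightarrow> 0)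
     else if q = 5 then (case x of Cb \<Rightarrow> 2 | Cc \<Rightarrow> 1 | Ca \<Rightarrow> 0)
     else (case x of Cb \<Rightarrow> 2 | Ca \<Rightarrow> 1 | Cc \<Rightarrow> 0))"

definition ranks_above :: "int \<Rightarrow> cand \<Rightarrow> cand \<Rightarrow> bool" where
  "ranks_above p x y \<longleftrightarrow> score p x > score p y"

definition Kset :: "'v set \<Rightarrow> ('v \<Rightarrow> int) \<Rightarrow> int \<Rightarrow> 'v set" where
  "Kset A ch p = {v \<in> A. ch v mod 6 = p mod 6}"

definition K3 :: "'v set \<Rightarrow> ('v \<Rightarrow> int) \<Rightarrow> int \<Rightarrow> int \<Rightarrow> int \<Rightarrow> 'v set" where
  "K3 A ch p q r = Kset A ch p \<union> Kset A ch q \<union> Kset A ch r"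

definition coll_pref :: "'v set \<Rightarrow> 'v set set \<Rightarrow> ('v \<Rightarrow> int) \<Rightarrow> cand rel" where
  "coll_pref A E ch = {(x, y). x \<noteq> y \<and> {v \<in> A. ranks_above (ch v) x y} \<in> E}"

end

theory Submission
  imports Defs
begin

lemma mod6_cases: "(p::int) mod 6 = 0 \<or> p mod 6 = 1 \<or> p mod 6 = 2 \<or> p mod 6 = 3 \<or> p mod 6 = 4 \<or> p mod 6 = 5"
  by arith

lemma rank_compl: "x \<noteq> y \<Longrightarrow> ranks_above p y x \<longleftrightarrow> \<not> ranks_above p x y"
  unfolding ranks_above_def using mod6_cases[of p]
  by (cases x; cases y; auto simp: Let_def)

lemma tri_eq:
  assumes "p mod 6 = k" "k \<in> {0..5}"
  shows "Kset A ch p \<union> Kset A ch (p+1) \<union> Kset A ch (p+2) =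
    {v \<in> A. ranks_above (ch v)
       (if k = 1 then Ca else if k = 2 then Cc else if k = 3 then Cc else if k = 4 then Cb else if k = 5 then Cb else Ca)
       (if k = 1 then Cb else if k = 2 then Cb else if k = 3 then Ca else if k = 4 then Ca else if k = 5 then Cc else Cc)}"
proof -
  have h1: "(p+1) mod 6 = (k+1) mod 6" "(p+2) mod 6 = (k+2) mod 6" using assms by presburger+
  show ?thesis unfolding Kset_def ranks_above_def h1
    apply (rule set_eqI)
    subgoal for v using assms mod6_cases[of "ch v"] by (auto simp: Let_def)
    done
qed

theorem mainTheorem3:
  fixes A :: "'v set" and E :: "'v set set" and ch :: "'v \<Rightarrow> int"
  assumes E_sub: "E \<subseteq> Pow A"
    and C1: "\<And>K. K \<subseteq> A \<Longrightarrow> (K \<in> E \<longleftrightarrow> A - K \<notin> E)"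
    and C2: "\<And>K L. K \<in> E \<Longrightarrow> K \<subseteq> L \<Longrightarrow> L \<subseteq> A \<Longrightarrow> L \<in> E"
    and V: "\<exists>p. K3 A ch p (p + 1) (p + 2) \<in> E \<and> K3 A ch (p + 1) (p + 2) (p + 3) \<in> E"
  shows "strict_linear_order_on (UNIV :: cand set) (coll_pref A E ch)"
proof -
  define S where "S x y = {v \<in> A. ranks_above (ch v) x y}" for x y
  have Sc: "S y x = A - S x y" if "x \<noteq> y" for x y
    unfolding S_def using rank_compl[OF that] by auto
  have Ex: "S x y \<in> E \<longleftrightarrow> S y x \<notin> E" if "x \<noteq> y" for x y
    using C1[of "S x y"] Sc[OF that] unfolding S_def by auto
  have R: "(x, y) \<in> coll_pref A E ch \<longleftrightarrow> x \<noteq> y \<and> S x y \<in> E" for x y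
    unfolding coll_pref_def S_def by auto
  obtain p where p1: "K3 A ch p (p + 1) (p + 2) \<in> E" and p2: "K3 A ch (p + 1) (p + 2) (p + 3) \<in> E"
    using V by blast
  define k where "k = p mod 6"
  have k1: "(p+1) mod 6 = (k+1) mod 6" unfolding k_def by presburger
  have kr: "k \<in> {0..5}" unfolding k_def by simp
  have kr1: "(k+1) mod 6 \<in> {0..5}" by simp
  have e1: "K3 A ch p (p + 1) (p + 2) = S
       (if k = 1 then Ca else if k = 2 then Cc else if k = 3 then Cc else if k = 4 then Cb else if k = 5 then Cb else Ca)
       (if k = 1 then Cb else if k = 2 then Cb else if k = 3 then Ca else if k = 4 then Ca else if k = 5 then Cc else Cc)"
    unfolding K3_def S_def using tri_eq[OF k_def[symmetric] kr] .
  have e2: "K3 A ch (p+1) (p + 1 + 1) (p + 1 + 2) = S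
       (if (k+1) mod 6 = 1 then Ca else if (k+1) mod 6 = 2 then Cc else if (k+1) mod 6 = 3 then Cc else if (k+1) mod 6 = 4 then Cb else if (k+1) mod 6 = 5 then Cb else Ca)
       (if (k+1) mod 6 = 1 then Cb else if (k+1) mod 6 = 2 then Cb else if (k+1) mod 6 = 3 then Ca else if (k+1) mod 6 = 4 then Ca else if (k+1) mod 6 = 5 then Cc else Cc)"
    unfolding K3_def S_def using tri_eq[OF k1 kr1] .
  have p2': "K3 A ch (p+1) (p + 1 + 1) (p + 1 + 2) \<in> E" using p2 by (simp add: add.assoc)
  have nc1: "\<not> (S Ca Cb \<in> E \<and> S Cb Cc \<in> E \<and> S Cc Ca \<in> E)"
   and nc2: "\<not> (S Ca Cc \<in> E \<and> S Cc Cb \<in> E \<and> S Cb Ca \<in> E)"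
  proof -
    have "k = 0 \<or> k = 1 \<or> k = 2 \<or> k = 3 \<or> k = 4 \<or> k = 5" using kr by auto
    then show "\<not> (S Ca Cb \<in> E \<and> S Cb Cc \<in> E \<and> S Cc Ca \<in> E)"
      "\<not> (S Ca Cc \<in> E \<and> S Cc Cb \<in> E \<and> S Cb Ca \<in> E)"
      using p1 p2' e1 e2 Ex[of Ca Cb] Ex[of Cb Cc] Ex[of Ca Cc]
      by (auto simp del: K3_def)
  qed
  have tr: "trans (coll_pref A E ch)"
  proof (rule transI)
    fix x y z assume "(x, y) \<in> coll_pref A E ch" "(y, z) \<in> coll_pref A E ch"
    then show "(x, z) \<in> coll_pref A E ch"
      using nc1 nc2 Ex[of Ca Cb] Ex[of Cb Cc] Ex[of Ca Cc]
      unfolding R by (cases x; cases y; cases z; auto)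
  qed
  have ir: "irrefl (coll_pref A E ch)" unfolding irrefl_def R by auto
  have to: "total_on UNIV (coll_pref A E ch)"
    unfolding total_on_def R using Ex by blast
  show ?thesis unfolding strict_linear_order_on_def using tr ir to by blast
qed

end
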